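(* There exists a probability distribution $\mu$ (on $\mathbb{R}_+$) such that $\mu\in\mathcal{S}_{loc}\setminus\mathcal{US}_{loc}$ and $\mu^{2*}\in\mathcal{S}_{ac}$.
   Context: For positive functions $f,g$ defined on some $[a,\infty)$, $f(x)\sim g(x)$ means $\lim_{x\to\infty}f(x)/g(x)=1$. A density function is a measurable $g:\mathbb{R}\to[0,\infty)$ with $\int g=1$. For integrable $f,g$, $f\otimes g(x):=\int f(x-u)g(u)\,du$; $\eta*\rho$ denotes convolution of measures and $\rho^{n*}$ the $n$-th convolution power. The class $\mathbf{L}$ consists of nonnegative measurable $g$ on $\mathbb{R}$ with $g(x)>0$ for all sufficiently large $x$ and $g(x+a)\sim g(x)$ for every $a\in\mathbb{R}$. $\mathcal{L}_d$ is the set of density functions in $\mathbf{L}$; $\mathcal{S}_d$ is the set of $g\in\mathcal{L}_d$ with $g\otimes g(x)\sim 2g(x)$. $\mathcal{S}_{ac}$ is the class of distributions $\rho(dx)=g(x)dx$ with $g\in\mathcal{S}_d$. For $\Delta=(0,c]$, $c>0$: a distribution $\rho$ belongs to $\mathcal{L}_\Delta$ if $x\mapsto\rho((x,x+c])$ belongs to $\mathbf{L}$, and to $\mathcal{S}_\Delta$ if moreover $\rho*\rho((x,x+c])\sim 2\rho((x,x+c])$. $\mathcal{L}_{loc}$ (resp. $\mathcal{S}_{loc}$) is the class of distributions in $\mathcal{L}_\Delta$ (resp. $\mathcal{S}_\Delta$) for every $\Delta=(0,c]$, $c>0$. $\mathcal{UL}_{loc}$ is the class of $\rho\in\mathcal{L}_{loc}$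 for which there is $p\in\mathcal{L}_d$ with $c^{-1}\rho((x-c,x])\sim p(x)$ uniformly in $c\in(0,1]$; $\mathcal{US}_{loc}$ is the class of $\rho\in\mathcal{S}_{loc}$ for which there is $p\in\mathcal{S}_d$ with $c^{-1}\rho((x-c,x])\sim p(x)$ uniformly in $c\in(0,1]$. *)

theory Defs
  imports "HOL-Probability.Probability" "HOL-Library.Landau_Symbols"
begin

definition distribution :: "real measure \<Rightarrow> bool" where
  "distribution \<rho> \<longleftrightarrow> prob_space \<rho> \<and> sets \<rho> = sets borel"

definition classL :: "(real \<Rightarrow> real) set" where
  "classL = {g. g \<in> borel_measurable borel \<and> (\<forall>x. 0 \<le> g x)
              \<and> (\<forall>\<^sub>F x in at_top. g x > 0)
              \<and> (\<forall>a::real. (\<lambda>x. g (x + a)) \<sim>[at_top] g)}"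

definition density_fun :: "(real \<Rightarrow> real) \<Rightarrow> bool" where
  "density_fun g \<longleftrightarrow> g \<in> borel_measurable borel \<and> (\<forall>x. 0 \<le> g x)
      \<and> (\<integral>\<^sup>+ x. ennreal (g x) \<partial>lborel) = 1"

definition conv_fun :: "(real \<Rightarrow> real) \<Rightarrow> (real \<Rightarrow> real) \<Rightarrow> real \<Rightarrow> real" where
  "conv_fun f g x = (\<integral> u. f (x - u) * g u \<partial>lborel)"

definition Ld :: "(real \<Rightarrow> real) set" where
  "Ld = {g. density_fun g \<and> g \<in> classL}"

definition Sd :: "(real \<Rightarrow> real) set" where
  "Sd = {g. g \<in> Ld \<and> conv_fun g g \<sim>[at_top] (\<lambda>x. 2 * g x)}"

definition S_ac :: "real measure set" where
  "S_ac = {\<rho>. distribution \<rho> \<and> (\<exists>g\<in>Sd. \<rho> = density lborel (\<lambda>x. ennreal (g x)))}"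

definition L_Delta :: "real \<Rightarrow> real measure set" where
  "L_Delta c = {\<rho>. distribution \<rho> \<and> (\<lambda>x. measure \<rho> {x<..x+c}) \<in> classL}"

definition S_Delta :: "real \<Rightarrow> real measure set" where
  "S_Delta c = {\<rho>. \<rho> \<in> L_Delta c \<and>
      (\<lambda>x. measure (\<rho> \<star> \<rho>) {x<..x+c}) \<sim>[at_top] (\<lambda>x. 2 * measure \<rho> {x<..x+c})}"

definition L_loc :: "real measure set" where
  "L_loc = {\<rho>. \<forall>c>0. \<rho> \<in> L_Delta c}"

definition S_loc :: "real measure set" where
  "S_loc = {\<rho>. \<forall>c>0. \<rho> \<in> S_Delta c}"

definition unif_local_asymp :: "real measure \<Rightarrow> (real \<Rightarrow> real) \<Rightarrow> bool" where
  "unif_local_asymp \<rho> p \<longleftrightarrow>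
     (\<forall>e>0. \<forall>\<^sub>F x in at_top. \<forall>c\<in>{0<..1}.
        \<bar>(measure \<rho> {x-c<..x} / c) / p x - 1\<bar> < e)"

definition UL_loc :: "real measure set" where
  "UL_loc = {\<rho>. \<rho> \<in> L_loc \<and> (\<exists>p\<in>Ld. unif_local_asymp \<rho> p)}"

definition US_loc :: "real measure set" where
  "US_loc = {\<rho>. \<rho> \<in> S_loc \<and> (\<exists>p\<in>Sd. unif_local_asymp \<rho> p)}"

end

theory Submission
  imports Defs "HOL-Real_Asymp.Real_Asymp"
begin


definition p0 :: "real \<Rightarrow> real" where
  "p0 x = (if 0 \<le> x then 1 / (1 + x)^2 else 0)"

lemma p0_meas[measurable]: "p0 \<in> borel_measurable borel"
  unfolding p0_def by measurable

lemma p0_nonneg: "0 \<le> p0 x" by (simp add: p0_def)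
lemma p0_pos: "0 \<le> x \<Longrightarrow> 0 < p0 x" by (simp add: p0_def)
lemma p0_le1: "p0 x \<le> 1"
  by (auto simp: p0_def field_simps)

lemma p0_nn: "(\<integral>\<^sup>+x. ennreal (p0 x) \<partial>lborel) = 1"
proof -
  have "(\<integral>\<^sup>+x. ennreal (p0 x) \<partial>lborel) = (\<integral>\<^sup>+x. ennreal (p0 x) * indicator {0..} x \<partial>lborel)"
    by (intro nn_integral_cong) (auto simp: p0_def indicator_def)
  also have "\<dots> = ennreal (0 - (-1/(1+(0::real))))"
  proof (rule nn_integral_FTC_atLeast)
    show "p0 \<in> borel_measurable borel" by measurable
    fix x :: real assume x: "0 \<le> x"
    show "((\<lambda>x. -1/(1+x)) has_real_derivative p0 x) (at x)"
      using x by (auto intro!: derivative_eq_intros simp: power2_eq_square p0_def)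
    show "0 \<le> p0 x" by (simp add: p0_nonneg)
  next
    show "((\<lambda>x::real. -1/(1+x)) \<longlongrightarrow> 0) at_top" by real_asymp
  qed
  finally show ?thesis by simp
qed

lemma p0_shift: "((\<lambda>x. p0 (x + b) / p0 x) \<longlongrightarrow> 1) at_top"
proof -
  have "eventually (\<lambda>x. (1+x)^2/(1+x+b)^2 = p0 (x + b) / p0 x) at_top"
    using eventually_ge_at_top[of "max 0 (-b)"]
    by eventually_elim (auto simp: p0_def field_simps)
  moreover have "((\<lambda>x. (1+x)^2/(1+x+b)^2) \<longlongrightarrow> 1) at_top" by real_asymp
  ultimately show ?thesis by (rule Lim_transform_eventually[rotated])
qed

lemma p0_half: "0 \<le> u \<Longrightarrow> u \<le> x/2 \<Longrightarrow> p0 (x - u) \<le> 4 * p0 x"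
proof -
  assume a: "0 \<le> u" "u \<le> x/2"
  have "1 + x \<le> 2 * (1 + (x - u))" using a by simp
  hence "(1+x)^2 \<le> (2 * (1 + (x - u)))^2" using a by (intro power_mono) auto
  moreover have "(2 * (1 + (x - u)))^2 = 4 * (1 + (x - u))^2" by (simp add: power2_eq_square algebra_simps)
  ultimately have "(1+x)^2 \<le> 4 * (1 + (x - u))^2" by simp
  thus ?thesis using a by (simp add: p0_def field_simps)
qed

lemma p0_lim0: "(p0 \<longlongrightarrow> 0) at_top"
proof -
  have "eventually (\<lambda>x. 1/(1+x)^2 = p0 x) at_top"
    using eventually_ge_at_top[of "0"] by eventually_elim (auto simp: p0_def)
  moreover have "((\<lambda>x::real. 1/(1+x)^2) \<longlongrightarrow> 0) at_top" by real_asymp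
  ultimately show ?thesis by (rule Lim_transform_eventually[rotated])
qed

definition In :: "nat \<Rightarrow> real set" where
  "In n = {real n + 1 <.. real n + 1 + (1/2)^(n+1)}"

definition U :: "real set" where "U = (\<Union>n. In n)"

lemma In_sets[measurable]: "In n \<in> sets borel" by (simp add: In_def)
lemma U_sets[measurable]: "U \<in> sets borel" unfolding U_def by measurable

lemma emeasure_In: "emeasure lborel (In n) = ennreal ((1/2)^(n+1))"
  by (simp add: In_def)

lemma geom_tail: "(\<lambda>n. (1/2::real)^(n+N+1)) sums ((1/2)^N)"
proof -
  have "(\<lambda>n. (1/2::real)^n) sums (1 / (1 - 1/2))" by (rule geometric_sums) simp
  hence "(\<lambda>n. (1/2::real)^(N+1) * (1/2)^n) sums ((1/2)^(N+1) * (1 / (1 - 1/2)))"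
    by (rule sums_mult)
  thus ?thesis by (simp add: power_add mult_ac)
qed

lemma U_tail: "emeasure lborel (U \<inter> {y..}) \<le> ennreal (4 * (1/2) powr y)"
proof -
  define N where "N = nat \<lceil>y - 2\<rceil>"
  have Ny: "y - 2 \<le> real N" unfolding N_def by linarith
  have sub: "U \<inter> {y..} \<subseteq> (\<Union>n. In (n + N))"
  proof
    fix x assume "x \<in> U \<inter> {y..}"
    then obtain m where m: "x \<in> In m" "y \<le> x" by (auto simp: U_def)
    have "(1/2::real)^(m+1) \<le> 1" by (intro power_le_one) auto
    with m have "y \<le> real m + 2" by (auto simp: In_def)
    hence "N \<le> m" unfolding N_def by linarith
    then have "m = (m - N) + N" by simp
    with m show "x \<in> (\<Union>n. In (n + N))" by (metis UNIV_I UN_I)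
  qed
  have "emeasure lborel (U \<inter> {y..}) \<le> emeasure lborel (\<Union>n. In (n + N))"
    by (rule emeasure_mono[OF sub]) measurable
  also have "\<dots> \<le> (\<Sum>n. emeasure lborel (In (n + N)))"
    by (rule emeasure_subadditive_countably) auto
  also have "\<dots> = (\<Sum>n. ennreal ((1/2)^(n+N+1)))"
    by (simp add: emeasure_In add.assoc)
  also have "\<dots> = ennreal ((1/2)^N)"
    by (rule suminf_ennreal_eq[OF _ geom_tail]) simp
  also have "\<dots> \<le> ennreal (4 * (1/2) powr y)"
  proof (rule ennreal_leI)
    have "(1/2::real)^N = (1/2) powr (real N)" by (simp add: powr_realpow)
    also have "\<dots> \<le> (1/2) powr (y - 2)" by (rule powr_mono') (use Ny in auto)
    also have "\<dots> = 4 * (1/2) powr y" by (simp add: powr_diff power2_eq_square)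
    finally show "(1/2::real)^N \<le> 4 * (1/2) powr y" .
  qed
  finally show ?thesis .
qed

lemma U_le1: "U \<subseteq> {1<..}" by (auto simp: U_def In_def)

lemma U_fin: "emeasure lborel U \<le> ennreal 4"
proof -
  have "U = U \<inter> {0..}" using U_le1 by auto
  thus ?thesis using U_tail[of 0] by simp
qed



lemma key:
  fixes h k1 k2 :: "real \<Rightarrow> real" and a M C K :: real and S :: "real \<Rightarrow> real set"
  assumes hm[measurable]: "h \<in> borel_measurable borel"
    and k1m[measurable]: "k1 \<in> borel_measurable borel"
    and k2m[measurable]: "k2 \<in> borel_measurable borel"
    and Sm[measurable]: "\<And>x. S x \<in> sets borel"
    and h0: "\<And>u. 0 \<le> h u" and hM: "\<And>u. h u \<le> M" and hneg: "\<And>u. u < 0 \<Longrightarrow> h u = 0"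
    and hint: "integrable lborel h"
    and k1pos: "\<And>y. 0 \<le> k1 y" and k1K: "\<And>y. k1 y \<le> K"
    and k1C: "\<And>y. 0 \<le> y \<Longrightarrow> k1 y \<le> C * p0 y"
    and k1lim: "((\<lambda>y. k1 y / p0 y) \<longlongrightarrow> a) at_top"
    and k2pos: "\<And>y. 0 \<le> k2 y" and k2int: "integrable lborel k2"
    and k2tail: "((\<lambda>x. integral\<^sup>L lborel (\<lambda>v. k2 v * indicator {x/2..} v) / p0 x) \<longlongrightarrow> 0) at_top"
    and Ssub: "\<And>x u. u \<in> S x \<Longrightarrow> u \<le> x/2"
    and Sev: "\<And>u. eventually (\<lambda>x. u \<in> S x) at_top"
  shows "((\<lambda>x. integral\<^sup>L lborel (\<lambda>u. (k1 (x-u) + k2 (x-u)) * h u * indicator (S x) u) / p0 x)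
           \<longlongrightarrow> a * integral\<^sup>L lborel h) at_top"
proof -
  have M0: "0 \<le> M" using h0[of 0] hM[of 0] by linarith
  have C0: "0 \<le> C" using k1pos[of 0] k1C[of 0] by (simp add: p0_def)
  have int1: "integrable lborel (\<lambda>u. k1 (x-u) * h u * indicator (S x) u)" for x
  proof (rule Bochner_Integration.integrable_bound[OF integrable_mult_right[OF hint, of K]])
    show "AE u in lborel. norm (k1 (x - u) * h u * indicator (S x) u) \<le> norm (K * h u)"
    proof (intro AE_I2)
      fix u
      have "k1 (x-u) * h u \<le> \<bar>K\<bar> * h u"
        using k1K[of "x-u"] h0[of u] by (intro mult_right_mono) auto
      thus "norm (k1 (x - u) * h u * indicator (S x) u) \<le> norm (K * h u)"
        using k1pos[of "x-u"] h0[of u] by (auto simp: indicator_def abs_mult)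
    qed
  qed measurable
  have k2int': "integrable lborel (\<lambda>u. k2 (x-u))" for x
    using lborel_integrable_real_affine[OF k2int, of "-1" x] by simp
  have int2: "integrable lborel (\<lambda>u. k2 (x-u) * h u * indicator (S x) u)" for x
  proof (rule Bochner_Integration.integrable_bound[OF integrable_mult_right[OF k2int'[of x], of M]])
    show "AE u in lborel. norm (k2 (x - u) * h u * indicator (S x) u) \<le> norm (M * k2 (x - u))"
      using k2pos hM h0 M0 by (auto intro!: mult_mono simp: indicator_def abs_mult mult.commute)
  qed measurable
  have split: "integral\<^sup>L lborel (\<lambda>u. (k1 (x-u) + k2 (x-u)) * h u * indicator (S x) u) / p0 x
     = integral\<^sup>L lborel (\<lambda>u. k1 (x-u) * h u * indicator (S x) u / p0 x)
       + integral\<^sup>L lborel (\<lambda>u. k2 (x-u) * h u * indicator (S x) u) / p0 x" for x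
  proof -
    have "integral\<^sup>L lborel (\<lambda>u. (k1 (x-u) + k2 (x-u)) * h u * indicator (S x) u)
      = integral\<^sup>L lborel (\<lambda>u. k1 (x-u) * h u * indicator (S x) u + k2 (x-u) * h u * indicator (S x) u)"
      by (simp add: algebra_simps)
    also have "\<dots> = integral\<^sup>L lborel (\<lambda>u. k1 (x-u) * h u * indicator (S x) u)
        + integral\<^sup>L lborel (\<lambda>u. k2 (x-u) * h u * indicator (S x) u)"
      by (rule Bochner_Integration.integral_add[OF int1 int2])
    finally show ?thesis by (simp add: add_divide_distrib)
  qed
  have P1: "((\<lambda>x. integral\<^sup>L lborel (\<lambda>u. k1 (x-u) * h u * indicator (S x) u / p0 x))
     \<longlongrightarrow> integral\<^sup>L lborel (\<lambda>u. a * h u)) at_top"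
  proof (rule integral_dominated_convergence_at_top[where w="\<lambda>u. 4 * C * h u"])
    show "integrable lborel (\<lambda>u. 4 * C * h u)" using hint by simp
    show "(\<lambda>u. a * h u) \<in> borel_measurable lborel" by measurable
    show "(\<lambda>u. k1 (t-u) * h u * indicator (S t) u / p0 t) \<in> borel_measurable lborel" for t
      by measurable
    show "AE u in lborel. ((\<lambda>t. k1 (t-u) * h u * indicator (S t) u / p0 t) \<longlongrightarrow> a * h u) at_top"
    proof (rule AE_I2)
      fix u :: real
      show "((\<lambda>t. k1 (t-u) * h u * indicator (S t) u / p0 t) \<longlongrightarrow> a * h u) at_top"
      proof (cases "u < 0")
        case True thus ?thesis using hneg[OF True] by simp
      next
        case False
        have lim1: "((\<lambda>t. k1 (t - u) / p0 (t - u)) \<longlongrightarrow> a) at_top"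
        proof -
          have fl: "filterlim (\<lambda>t::real. t - u) at_top at_top" by real_asymp
          show ?thesis using filterlim_compose[OF k1lim fl] by simp
        qed
        have lim2: "((\<lambda>t. p0 (t + - u) / p0 t) \<longlongrightarrow> 1) at_top" by (rule p0_shift)
        have "((\<lambda>t. (k1 (t - u) / p0 (t - u)) * (p0 (t + - u) / p0 t) * h u) \<longlongrightarrow> a * 1 * h u) at_top"
          by (intro tendsto_mult lim1 lim2 tendsto_const)
        moreover have "eventually (\<lambda>t. (k1 (t - u) / p0 (t - u)) * (p0 (t + - u) / p0 t) * h u
                = k1 (t-u) * h u * indicator (S t) u / p0 t) at_top"
          using Sev[of u] eventually_ge_at_top[of u]
        proof eventually_elim
          case (elim t)
          have "0 < p0 (t - u)" "0 < p0 t" using elim False by (auto intro: p0_pos)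
          thus ?case using elim by (simp add: field_simps)
        qed
        ultimately show ?thesis by (simp add: Lim_transform_eventually)
      qed
    qed
    show "\<forall>\<^sub>F t in at_top. AE u in lborel. norm (k1 (t-u) * h u * indicator (S t) u / p0 t) \<le> 4 * C * h u"
      using eventually_ge_at_top[of 0]
    proof eventually_elim
      case (elim t)
      show ?case
      proof (rule AE_I2)
        fix u
        show "norm (k1 (t-u) * h u * indicator (S t) u / p0 t) \<le> 4 * C * h u"
        proof (cases "u \<in> S t \<and> 0 \<le> u")
          case True
          hence ut: "0 \<le> u" "u \<le> t/2" using Ssub by auto
          have pt: "0 < p0 t" using elim by (simp add: p0_pos)
          have "k1 (t-u) \<le> C * p0 (t - u)" using ut by (intro k1C) simp
          also have "\<dots> \<le> C * (4 * p0 t)" using p0_half[OF ut] C0 by (intro mult_left_mono)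
          finally have "k1 (t-u) / p0 t \<le> 4 * C" using pt by (simp add: field_simps)
          hence "k1 (t-u) / p0 t * h u \<le> 4 * C * h u" using h0 by (intro mult_right_mono)
          thus ?thesis using True pt k1pos h0 by (simp add: abs_mult)
        next
          case False
          thus ?thesis using hneg[of u] C0 h0 by (auto simp: indicator_def)
        qed
      qed
    qed
  qed
  have P2: "((\<lambda>x. integral\<^sup>L lborel (\<lambda>u. k2 (x-u) * h u * indicator (S x) u) / p0 x) \<longlongrightarrow> 0) at_top"
  proof (rule tendsto_sandwich[where f="\<lambda>x. 0" and h="\<lambda>x. M * (integral\<^sup>L lborel (\<lambda>v. k2 v * indicator {x/2..} v) / p0 x)"])
    show "((\<lambda>x. 0) \<longlongrightarrow> (0::real)) at_top" by simp
    show "((\<lambda>x. M * (integral\<^sup>L lborel (\<lambda>v. k2 v * indicator {x/2..} v) / p0 x)) \<longlongrightarrow> 0) at_top"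
      using tendsto_mult[OF tendsto_const[of M] k2tail] by simp
    show "eventually (\<lambda>x. 0 \<le> integral\<^sup>L lborel (\<lambda>u. k2 (x-u) * h u * indicator (S x) u) / p0 x) at_top"
      by (intro always_eventually allI divide_nonneg_nonneg integral_nonneg)
         (auto simp: p0_nonneg k2pos h0 indicator_def)
    show "eventually (\<lambda>x. integral\<^sup>L lborel (\<lambda>u. k2 (x-u) * h u * indicator (S x) u) / p0 x
        \<le> M * (integral\<^sup>L lborel (\<lambda>v. k2 v * indicator {x/2..} v) / p0 x)) at_top"
      using eventually_ge_at_top[of 0]
    proof eventually_elim
      case (elim x)
      have pt: "0 < p0 x" using elim by (simp add: p0_pos)
      have intk: "integrable lborel (\<lambda>v. k2 v * indicator {x/2..} v)"
        using integrable_mult_indicator[OF _ k2int, of "{x/2..}"] by (simp add: mult.commute)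
      have sub: "integral\<^sup>L lborel (\<lambda>v. k2 v * indicator {x/2..} v)
          = integral\<^sup>L lborel (\<lambda>u. k2 (x-u) * indicator {..x/2} u)"
        using lborel_integral_real_affine[of "-1" "\<lambda>v. k2 v * indicator {x/2..} v" x]
        by (simp add: indicator_def)
      have intk': "integrable lborel (\<lambda>u. k2 (x-u) * indicator {..x/2} u)"
        using integrable_mult_indicator[OF _ k2int'[of x], of "{..x/2}"] by (simp add: mult.commute)
      have "integral\<^sup>L lborel (\<lambda>u. k2 (x-u) * h u * indicator (S x) u)
          \<le> integral\<^sup>L lborel (\<lambda>u. M * (k2 (x-u) * indicator {..x/2} u))"
      proof (rule Bochner_Integration.integral_mono[OF int2])
        show "integrable lborel (\<lambda>u. M * (k2 (x-u) * indicator {..x/2} u))" using intk' by simp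
        fix u
        show "k2 (x-u) * h u * indicator (S x) u \<le> M * (k2 (x-u) * indicator {..x/2} u)"
          using Ssub[of u x] k2pos[of "x-u"] hM[of u] h0[of u]
          by (auto simp: indicator_def mult.commute intro: mult_right_mono)
      qed
      also have "\<dots> = M * integral\<^sup>L lborel (\<lambda>v. k2 v * indicator {x/2..} v)" using sub by simp
      finally show ?case using pt by (simp add: divide_right_mono)
    qed
  qed
  have "((\<lambda>x. integral\<^sup>L lborel (\<lambda>u. k1 (x-u) * h u * indicator (S x) u / p0 x)
       + integral\<^sup>L lborel (\<lambda>u. k2 (x-u) * h u * indicator (S x) u) / p0 x)
      \<longlongrightarrow> integral\<^sup>L lborel (\<lambda>u. a * h u) + 0) at_top"
    by (intro tendsto_add P1 P2)
  thus ?thesis by (simp add: split)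
qed



lemma conv_split:
  fixes F :: "real \<Rightarrow> real"
  assumes [measurable]: "F \<in> borel_measurable borel"
    and int: "integrable lborel (\<lambda>u. F (x - u) * F u)"
  shows "conv_fun F F x = integral\<^sup>L lborel (\<lambda>u. F (x - u) * F u * indicator {..x/2} u)
        + integral\<^sup>L lborel (\<lambda>u. F (x - u) * F u * indicator {..<x/2} u)"
proof -
  have i1: "integrable lborel (\<lambda>u. F (x - u) * F u * indicator {..x/2} u)"
    using integrable_mult_indicator[OF _ int, of "{..x/2}"] by (simp add: mult.commute)
  have i2: "integrable lborel (\<lambda>u. F (x - u) * F u * indicator {x/2<..} u)"
    using integrable_mult_indicator[OF _ int, of "{x/2<..}"] by (simp add: mult.commute)
  have "conv_fun F F x = integral\<^sup>L lborel (\<lambda>u. F (x - u) * F u * indicator {..x/2} u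
        + F (x - u) * F u * indicator {x/2<..} u)"
    unfolding conv_fun_def by (intro Bochner_Integration.integral_cong) (auto simp: indicator_def)
  also have "\<dots> = integral\<^sup>L lborel (\<lambda>u. F (x - u) * F u * indicator {..x/2} u)
        + integral\<^sup>L lborel (\<lambda>u. F (x - u) * F u * indicator {x/2<..} u)"
    by (rule Bochner_Integration.integral_add[OF i1 i2])
  also have "integral\<^sup>L lborel (\<lambda>u. F (x - u) * F u * indicator {x/2<..} u)
      = integral\<^sup>L lborel (\<lambda>u. F (x - u) * F u * indicator {..<x/2} u)"
    using lborel_integral_real_affine[of "-1" "\<lambda>u. F (x - u) * F u * indicator {x/2<..} u" x]
    by (simp add: indicator_def mult.commute)
  finally show ?thesis .
qed

lemma conv_lim:
  fixes F qa qb :: "real \<Rightarrow> real" and a M C K :: real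
  assumes Fm[measurable]: "F \<in> borel_measurable borel"
    and qam[measurable]: "qa \<in> borel_measurable borel"
    and qbm[measurable]: "qb \<in> borel_measurable borel"
    and Fk: "\<And>y. F y = qa y + qb y"
    and h0: "\<And>u. 0 \<le> F u" and hM: "\<And>u. F u \<le> M" and hneg: "\<And>u. u < 0 \<Longrightarrow> F u = 0"
    and hint: "integrable lborel F"
    and qapos: "\<And>y. 0 \<le> qa y" and qaK: "\<And>y. qa y \<le> K"
    and qaC: "\<And>y. 0 \<le> y \<Longrightarrow> qa y \<le> C * p0 y"
    and qalim: "((\<lambda>y. qa y / p0 y) \<longlongrightarrow> a) at_top"
    and qbpos: "\<And>y. 0 \<le> qb y" and qbint: "integrable lborel qb"
    and qbtail: "((\<lambda>x. integral\<^sup>L lborel (\<lambda>v. qb v * indicator {x/2..} v) / p0 x) \<longlongrightarrow> 0) at_top"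
  shows "((\<lambda>x. conv_fun F F x / p0 x) \<longlongrightarrow> 2 * a * integral\<^sup>L lborel F) at_top"
proof -
  have M0: "0 \<le> M" using h0[of 0] hM[of 0] by linarith
  have int: "integrable lborel (\<lambda>u. F (x - u) * F u)" for x
  proof (rule Bochner_Integration.integrable_bound[OF integrable_mult_right[OF hint, of M]])
    show "AE u in lborel. norm (F (x - u) * F u) \<le> norm (M * F u)"
      using h0 hM M0 by (auto intro!: mult_right_mono simp: abs_mult)
  qed measurable
  have L1: "((\<lambda>x. integral\<^sup>L lborel (\<lambda>u. (qa (x-u) + qb (x-u)) * F u * indicator ((\<lambda>x. {..x/2}) x) u) / p0 x)
           \<longlongrightarrow> a * integral\<^sup>L lborel F) at_top"
    by (rule key[OF Fm qam qbm _ h0 hM hneg hint qapos qaK qaC qalim qbpos qbint qbtail])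
       (auto intro: eventually_ge_at_top)
  have L2: "((\<lambda>x. integral\<^sup>L lborel (\<lambda>u. (qa (x-u) + qb (x-u)) * F u * indicator ((\<lambda>x. {..<x/2}) x) u) / p0 x)
           \<longlongrightarrow> a * integral\<^sup>L lborel F) at_top"
    by (rule key[OF Fm qam qbm _ h0 hM hneg hint qapos qaK qaC qalim qbpos qbint qbtail])
       (auto intro: eventually_gt_at_top)
  have "((\<lambda>x. integral\<^sup>L lborel (\<lambda>u. (qa (x-u) + qb (x-u)) * F u * indicator {..x/2} u) / p0 x
          + integral\<^sup>L lborel (\<lambda>u. (qa (x-u) + qb (x-u)) * F u * indicator {..<x/2} u) / p0 x)
        \<longlongrightarrow> a * integral\<^sup>L lborel F + a * integral\<^sup>L lborel F) at_top"
    using tendsto_add[OF L1 L2] by simp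
  moreover have "(\<lambda>x. integral\<^sup>L lborel (\<lambda>u. (qa (x-u) + qb (x-u)) * F u * indicator {..x/2} u) / p0 x
          + integral\<^sup>L lborel (\<lambda>u. (qa (x-u) + qb (x-u)) * F u * indicator {..<x/2} u) / p0 x)
      = (\<lambda>x. conv_fun F F x / p0 x)"
    by (rule ext) (simp add: conv_split[OF Fm int] add_divide_distrib Fk[symmetric])
  ultimately show ?thesis by (simp add: algebra_simps)
qed

lemma window_lim:
  fixes F qa qb :: "real \<Rightarrow> real" and a C c :: real
  assumes Fm[measurable]: "F \<in> borel_measurable borel"
    and qam[measurable]: "qa \<in> borel_measurable borel"
    and qbm[measurable]: "qb \<in> borel_measurable borel"
    and Fk: "\<And>y. F y = qa y + qb y"
    and qapos: "\<And>y. 0 \<le> qa y" and qaint: "integrable lborel qa"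
    and qaC: "\<And>y. 0 \<le> y \<Longrightarrow> qa y \<le> C * p0 y"
    and qalim: "((\<lambda>y. qa y / p0 y) \<longlongrightarrow> a) at_top"
    and qbpos: "\<And>y. 0 \<le> qb y" and qbint: "integrable lborel qb"
    and qbtail: "((\<lambda>x. integral\<^sup>L lborel (\<lambda>v. qb v * indicator {x..} v) / p0 x) \<longlongrightarrow> 0) at_top"
    and c: "0 < c"
  shows "((\<lambda>x. integral\<^sup>L lborel (\<lambda>v. F v * indicator {x<..x+c} v) / p0 x) \<longlongrightarrow> a * c) at_top"
proof -
  have C0: "0 \<le> C" using qapos[of 0] qaC[of 0] by (simp add: p0_def)
  have iqa: "integrable lborel (\<lambda>v. qa v * indicator A v)" if [measurable]: "A \<in> sets borel" for A
    using integrable_mult_indicator[OF _ qaint, of A] by (simp add: mult.commute)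
  have iqb: "integrable lborel (\<lambda>v. qb v * indicator A v)" if [measurable]: "A \<in> sets borel" for A
    using integrable_mult_indicator[OF _ qbint, of A] by (simp add: mult.commute)
  have split: "integral\<^sup>L lborel (\<lambda>v. F v * indicator {x<..x+c} v) / p0 x
     = integral\<^sup>L lborel (\<lambda>t. qa (x + t) * indicator {0<..c} t / p0 x)
       + integral\<^sup>L lborel (\<lambda>v. qb v * indicator {x<..x+c} v) / p0 x" for x
  proof -
    have "integral\<^sup>L lborel (\<lambda>v. F v * indicator {x<..x+c} v)
      = integral\<^sup>L lborel (\<lambda>v. qa v * indicator {x<..x+c} v + qb v * indicator {x<..x+c} v)"
      by (simp add: Fk algebra_simps)
    also have "\<dots> = integral\<^sup>L lborel (\<lambda>v. qa v * indicator {x<..x+c} v)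
        + integral\<^sup>L lborel (\<lambda>v. qb v * indicator {x<..x+c} v)"
      by (rule Bochner_Integration.integral_add[OF iqa iqb]) auto
    also have "integral\<^sup>L lborel (\<lambda>v. qa v * indicator {x<..x+c} v)
        = integral\<^sup>L lborel (\<lambda>t. qa (x + t) * indicator {0<..c} t)"
      using lborel_integral_real_affine[of 1 "\<lambda>v. qa v * indicator {x<..x+c} v" x]
      by (simp add: indicator_def)
    finally show ?thesis by (simp add: add_divide_distrib)
  qed
  have P1: "((\<lambda>x. integral\<^sup>L lborel (\<lambda>t. qa (x + t) * indicator {0<..c} t / p0 x))
     \<longlongrightarrow> integral\<^sup>L lborel (\<lambda>t. a * indicator {0<..c} t)) at_top"
  proof (rule integral_dominated_convergence_at_top[where w="\<lambda>t. C * indicator {0<..c} t"])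
    have "integrable lborel (indicator {0<..c} :: real \<Rightarrow> real)" by (rule integrable_real_indicator) (use c in \<open>auto simp: emeasure_lborel_Ioc\<close>)
    thus "integrable lborel (\<lambda>t. C * indicator {0<..c} t :: real)" by simp
    show "(\<lambda>t. a * indicator {0<..c} t :: real) \<in> borel_measurable lborel" by measurable
    show "(\<lambda>t. qa (x + t) * indicator {0<..c} t / p0 x) \<in> borel_measurable lborel" for x
      by measurable
    show "AE t in lborel. ((\<lambda>x. qa (x + t) * indicator {0<..c} t / p0 x) \<longlongrightarrow> a * indicator {0<..c} t) at_top"
    proof (rule AE_I2)
      fix t :: real
      have fl: "filterlim (\<lambda>x::real. x + t) at_top at_top" by real_asymp
      have lim1: "((\<lambda>x. qa (x + t) / p0 (x + t)) \<longlongrightarrow> a) at_top"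
        using filterlim_compose[OF qalim fl] by simp
      have "((\<lambda>x. (qa (x + t) / p0 (x + t)) * (p0 (x + t) / p0 x) * indicator {0<..c} t)
          \<longlongrightarrow> a * 1 * indicator {0<..c} t) at_top"
        by (intro tendsto_mult lim1 p0_shift tendsto_const)
      moreover have "eventually (\<lambda>x. (qa (x + t) / p0 (x + t)) * (p0 (x + t) / p0 x) * indicator {0<..c} t
          = qa (x + t) * indicator {0<..c} t / p0 x) at_top"
        using eventually_ge_at_top[of "max 0 (-t)"]
      proof eventually_elim
        case (elim x)
        have "0 < p0 (x + t)" "0 < p0 x" using elim by (auto intro: p0_pos)
        thus ?case by (simp add: field_simps)
      qed
      ultimately show "((\<lambda>x. qa (x + t) * indicator {0<..c} t / p0 x) \<longlongrightarrow> a * indicator {0<..c} t) at_top"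
        by (simp add: Lim_transform_eventually)
    qed
    show "\<forall>\<^sub>F x in at_top. AE t in lborel. norm (qa (x + t) * indicator {0<..c} t / p0 x) \<le> C * indicator {0<..c} t"
      using eventually_ge_at_top[of 0]
    proof eventually_elim
      case (elim x)
      show ?case
      proof (rule AE_I2)
        fix t :: real
        show "norm (qa (x + t) * indicator {0<..c} t / p0 x) \<le> C * indicator {0<..c} t"
        proof (cases "t \<in> {0<..c}")
          case True
          have px: "0 < p0 x" using elim by (simp add: p0_pos)
          have "qa (x + t) \<le> C * p0 (x + t)" using True elim by (intro qaC) simp
          also have "p0 (x + t) \<le> p0 x" using True elim
            by (auto simp: p0_def intro!: divide_left_mono power_mono mult_pos_pos)
          hence "C * p0 (x + t) \<le> C * p0 x" using C0 by (intro mult_left_mono)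
          finally have "qa (x + t) / p0 x \<le> C" using px by (simp add: field_simps)
          thus ?thesis using True px qapos[of "x+t"] by simp
        qed simp
      qed
    qed
  qed
  have P2: "((\<lambda>x. integral\<^sup>L lborel (\<lambda>v. qb v * indicator {x<..x+c} v) / p0 x) \<longlongrightarrow> 0) at_top"
  proof (rule tendsto_sandwich[where f="\<lambda>x. 0" and h="\<lambda>x. integral\<^sup>L lborel (\<lambda>v. qb v * indicator {x..} v) / p0 x"])
    show "eventually (\<lambda>x. 0 \<le> integral\<^sup>L lborel (\<lambda>v. qb v * indicator {x<..x+c} v) / p0 x) at_top"
      by (intro always_eventually allI divide_nonneg_nonneg integral_nonneg)
         (auto simp: p0_nonneg qbpos)
    show "eventually (\<lambda>x. integral\<^sup>L lborel (\<lambda>v. qb v * indicator {x<..x+c} v) / p0 x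
       \<le> integral\<^sup>L lborel (\<lambda>v. qb v * indicator {x..} v) / p0 x) at_top"
      using eventually_ge_at_top[of 0]
    proof eventually_elim
      case (elim x)
      have "integral\<^sup>L lborel (\<lambda>v. qb v * indicator {x<..x+c} v) \<le> integral\<^sup>L lborel (\<lambda>v. qb v * indicator {x..} v)"
        by (rule Bochner_Integration.integral_mono[OF iqb iqb])
           (auto simp: indicator_def qbpos)
      thus ?case using p0_nonneg[of x] by (rule divide_right_mono)
    qed
  qed (use qbtail in auto)
  have "((\<lambda>x. integral\<^sup>L lborel (\<lambda>t. qa (x + t) * indicator {0<..c} t / p0 x)
       + integral\<^sup>L lborel (\<lambda>v. qb v * indicator {x<..x+c} v) / p0 x)
      \<longlongrightarrow> integral\<^sup>L lborel (\<lambda>t. a * indicator {0<..c} t) + 0) at_top"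
    by (intro tendsto_add P1 P2)
  thus ?thesis using c by (simp add: split)
qed

lemma ratio_classL:
  fixes W :: "real \<Rightarrow> real"
  assumes "W \<in> borel_measurable borel" "\<And>x. 0 \<le> W x"
    and lim: "((\<lambda>x. W x / p0 x) \<longlongrightarrow> L) at_top" and L: "0 < L"
  shows "W \<in> classL"
proof -
  have pos: "eventually (\<lambda>x. 0 < W x) at_top"
  proof -
    have "eventually (\<lambda>x. 0 < W x / p0 x) at_top" using order_tendstoD(1)[OF lim L] .
    thus ?thesis using eventually_ge_at_top[of 0]
    proof eventually_elim
      case (elim x)
      hence "0 < p0 x" by (simp add: p0_pos)
      thus ?case using elim by (simp add: zero_less_divide_iff)
    qed
  qed
  have sh: "(\<lambda>x. W (x + b)) \<sim>[at_top] W" for b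
  proof (rule asymp_equivI')
    have fl: "filterlim (\<lambda>x::real. x + b) at_top at_top" by real_asymp
    have l1: "((\<lambda>x. W (x + b) / p0 (x + b)) \<longlongrightarrow> L) at_top"
      using filterlim_compose[OF lim fl] by simp
    have "((\<lambda>x. (W (x + b) / p0 (x + b)) * (p0 (x + b) / p0 x) / (W x / p0 x)) \<longlongrightarrow> L * 1 / L) at_top"
      by (intro tendsto_divide tendsto_mult l1 p0_shift lim) (use L in auto)
    moreover have "eventually (\<lambda>x. (W (x + b) / p0 (x + b)) * (p0 (x + b) / p0 x) / (W x / p0 x)
       = W (x + b) / W x) at_top"
      using eventually_ge_at_top[of "max 0 (-b)"] pos
    proof eventually_elim
      case (elim x)
      have "0 < p0 (x + b)" "0 < p0 x" using elim by (auto intro: p0_pos)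
      thus ?case using elim by (simp add: field_simps)
    qed
    ultimately show "((\<lambda>x. W (x + b) / W x) \<longlongrightarrow> 1) at_top"
      using L by (simp add: Lim_transform_eventually)
  qed
  show ?thesis unfolding classL_def using assms pos sh by auto
qed

lemma ratio_equiv:
  fixes W V :: "real \<Rightarrow> real"
  assumes l1: "((\<lambda>x. W x / p0 x) \<longlongrightarrow> L1) at_top"
    and l2: "((\<lambda>x. V x / p0 x) \<longlongrightarrow> L2) at_top" and L2: "L2 \<noteq> 0" and L1: "L1 = 2 * L2"
  shows "W \<sim>[at_top] (\<lambda>x. 2 * V x)"
proof (rule asymp_equivI'_const)
  have "eventually (\<lambda>x. V x / p0 x \<noteq> 0) at_top"
    using tendsto_imp_eventually_ne[OF l2 L2] .
  hence "eventually (\<lambda>x. (W x / p0 x) / (V x / p0 x) = W x / V x) at_top"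
    using eventually_ge_at_top[of 0]
    by eventually_elim (auto simp: p0_pos field_simps)
  moreover have "((\<lambda>x. (W x / p0 x) / (V x / p0 x)) \<longlongrightarrow> L1 / L2) at_top"
    by (intro tendsto_divide l1 l2 L2)
  ultimately show "((\<lambda>x. W x / V x) \<longlongrightarrow> 2) at_top"
    using L1 L2 by (simp add: Lim_transform_eventually)
qed simp



definition s :: "real \<Rightarrow> real" where "s x = indicator U x"
definition Z :: real where "Z = integral\<^sup>L lborel (\<lambda>x. p0 x + s x)"
definition f :: "real \<Rightarrow> real" where "f x = (p0 x + s x) / Z"
definition mu :: "real measure" where "mu = density lborel (\<lambda>x. ennreal (f x))"
definition g :: "real \<Rightarrow> real" where "g = conv_fun f f"

lemma s_meas[measurable]: "s \<in> borel_measurable borel" unfolding s_def by measurable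
lemma s_nonneg: "0 \<le> s x" by (simp add: s_def)
lemma s_le1: "s x \<le> 1" by (simp add: s_def indicator_def)
lemma s_neg: "x < 0 \<Longrightarrow> s x = 0" using U_le1 by (auto simp: s_def indicator_def)

lemma p0_int: "integrable lborel p0"
  by (rule integrableI_nonneg) (auto simp: p0_nonneg p0_nn)
lemma p0_integral: "integral\<^sup>L lborel p0 = 1"
  by (subst integral_eq_nn_integral) (auto simp: p0_nonneg p0_nn)

lemma U_finite: "emeasure lborel U < \<top>"
  by (rule order.strict_trans1[OF U_fin]) simp
lemma U_finite': "emeasure lborel U \<noteq> \<top>"
  using U_finite by simp

lemma s_int: "integrable lborel s"
  unfolding s_def by (rule integrable_real_indicator) (auto simp: U_finite)

lemma Z_eq: "Z = 1 + measure lborel U"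
proof -
  have "Z = integral\<^sup>L lborel p0 + integral\<^sup>L lborel s"
    unfolding Z_def by (rule Bochner_Integration.integral_add[OF p0_int s_int])
  also have "integral\<^sup>L lborel s = measure lborel U"
    unfolding s_def by simp
  finally show ?thesis by (simp add: p0_integral)
qed

lemma Z_ge1: "1 \<le> Z" using Z_eq measure_nonneg[of lborel U] by linarith
lemma Z_pos: "0 < Z" using Z_ge1 by simp

lemma f_meas[measurable]: "f \<in> borel_measurable borel" unfolding f_def by measurable
lemma f_nonneg: "0 \<le> f x" using Z_pos by (simp add: f_def p0_nonneg s_nonneg)
lemma f_le2: "f x \<le> 2"
proof -
  have "p0 x + s x \<le> 2" using p0_le1[of x] s_le1[of x] by simp
  also have "\<dots> \<le> 2 * Z" using Z_ge1 by simp
  finally show ?thesis using Z_pos by (simp add: f_def divide_le_eq)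
qed
lemma f_neg: "x < 0 \<Longrightarrow> f x = 0" by (simp add: f_def p0_def s_neg)
lemma f_int: "integrable lborel f"
  unfolding f_def using p0_int s_int by simp
lemma f_integral: "integral\<^sup>L lborel f = 1"
  unfolding f_def using Z_pos by (simp add: Z_def)
lemma f_nn: "(\<integral>\<^sup>+x. ennreal (f x) \<partial>lborel) = 1"
  using nn_integral_eq_integral[OF f_int] f_nonneg f_integral by simp

lemma s_tail: "integral\<^sup>L lborel (\<lambda>v. s v * indicator {y..} v) \<le> 4 * (1/2) powr y"
proof -
  have "integral\<^sup>L lborel (\<lambda>v. s v * indicator {y..} v) = integral\<^sup>L lborel (indicator (U \<inter> {y..}))"
    by (intro Bochner_Integration.integral_cong) (auto simp: s_def indicator_def)
  also have "\<dots> = measure lborel (U \<inter> {y..})" by simp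
  also have "\<dots> \<le> 4 * (1/2) powr y"
  proof -
    have fin: "emeasure lborel (U \<inter> {y..}) \<noteq> \<top>"
      using U_tail[of y] by (auto simp: top_unique)
    have "ennreal (measure lborel (U \<inter> {y..})) \<le> ennreal (4 * (1/2) powr y)"
      using U_tail[of y] emeasure_eq_ennreal_measure[OF fin] by simp
    thus ?thesis by (simp add: ennreal_le_iff)
  qed
  finally show ?thesis .
qed

lemma tail_lim: "((\<lambda>x. integral\<^sup>L lborel (\<lambda>v. s v / Z * indicator {b * x..} v) / p0 x) \<longlongrightarrow> 0) at_top"
  if b: "((\<lambda>x::real. (1/2) powr (b * x) * (1 + x)^2) \<longlongrightarrow> 0) at_top" for b :: real
proof (rule tendsto_sandwich[where f="\<lambda>x. 0" and h="\<lambda>x. 4 / Z * ((1/2) powr (b * x) * (1 + x)^2)"])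
  show "eventually (\<lambda>x. 0 \<le> integral\<^sup>L lborel (\<lambda>v. s v / Z * indicator {b * x..} v) / p0 x) at_top"
    using Z_pos by (intro always_eventually allI divide_nonneg_nonneg integral_nonneg) (auto simp: p0_nonneg s_nonneg)
  show "eventually (\<lambda>x. integral\<^sup>L lborel (\<lambda>v. s v / Z * indicator {b * x..} v) / p0 x
      \<le> 4 / Z * ((1/2) powr (b * x) * (1 + x)^2)) at_top"
    using eventually_ge_at_top[of 0]
  proof eventually_elim
    case (elim x)
    have "integral\<^sup>L lborel (\<lambda>v. s v / Z * indicator {b * x..} v)
        = integral\<^sup>L lborel (\<lambda>v. s v * indicator {b * x..} v) / Z"
      by (simp add: field_simps)
    also have "\<dots> \<le> 4 * (1/2) powr (b * x) / Z"
      using s_tail Z_pos by (intro divide_right_mono) auto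
    finally show ?case using elim Z_pos by (simp add: p0_def field_simps)
  qed
  show "((\<lambda>x. 4 / Z * ((1/2) powr (b * x) * (1 + x)^2)) \<longlongrightarrow> 0) at_top"
    using tendsto_mult[OF tendsto_const[of "4/Z"] b] by simp
qed simp

lemma k1f_lim: "((\<lambda>y. p0 y / Z / p0 y) \<longlongrightarrow> 1 / Z) at_top"
proof -
  have "eventually (\<lambda>y. 1 / Z = p0 y / Z / p0 y) at_top"
    using eventually_ge_at_top[of 0]
  proof eventually_elim
    case (elim y)
    hence "0 < p0 y" by (rule p0_pos)
    thus ?case using Z_pos by simp
  qed
  thus ?thesis by (rule Lim_transform_eventually[rotated]) simp
qed

lemma fk: "f y = p0 y / Z + s y / Z" by (simp add: f_def add_divide_distrib)

lemma g_lim: "((\<lambda>x. g x / p0 x) \<longlongrightarrow> 2 / Z) at_top"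
proof -
  have "((\<lambda>x. conv_fun f f x / p0 x) \<longlongrightarrow> 2 * (1 / Z) * integral\<^sup>L lborel f) at_top"
  proof (rule conv_lim[where qa="\<lambda>y. p0 y / Z" and qb="\<lambda>y. s y / Z" and M=2 and K="1/Z" and C="1/Z"])
    show "((\<lambda>x. integral\<^sup>L lborel (\<lambda>v. s v / Z * indicator {x / 2..} v) / p0 x) \<longlongrightarrow> 0) at_top"
    proof -
      have "((\<lambda>x::real. (1/2) powr (1/2 * x) * (1 + x)^2) \<longlongrightarrow> 0) at_top" by real_asymp
      from tail_lim[OF this] show ?thesis by simp
    qed
  qed (use Z_pos k1f_lim f_int s_int f_le2[unfolded fk] f_neg[unfolded fk] in \<open>auto simp: fk f_nonneg f_le2 f_neg p0_nonneg s_nonneg p0_le1 divide_right_mono\<close>)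
  thus ?thesis by (simp add: g_def f_integral)
qed



lemma f_prod_int: "integrable lborel (\<lambda>u. f (x - u) * f u)"
proof (rule Bochner_Integration.integrable_bound[OF integrable_mult_right[OF f_int, of 2]])
  show "AE u in lborel. norm (f (x - u) * f u) \<le> norm (2 * f u)"
    using f_nonneg f_le2 by (auto intro!: mult_right_mono simp: abs_mult)
qed measurable

lemma g_meas[measurable]: "g \<in> borel_measurable borel"
  unfolding g_def conv_fun_def by measurable

lemma g_nonneg: "0 \<le> g x"
  unfolding g_def conv_fun_def by (intro Bochner_Integration.integral_nonneg) (simp add: f_nonneg)

lemma g_le2: "g x \<le> 2"
proof -
  have "g x \<le> integral\<^sup>L lborel (\<lambda>u. 2 * f u)"
    unfolding g_def conv_fun_def
    by (rule Bochner_Integration.integral_mono[OF f_prod_int])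
       (use f_int f_nonneg f_le2 in \<open>auto intro!: mult_right_mono\<close>)
  thus ?thesis by (simp add: f_integral)
qed

lemma g_neg: "x < 0 \<Longrightarrow> g x = 0"
proof -
  assume x: "x < 0"
  have z: "f (x - u) * f u = 0" for u
  proof (cases "u < 0")
    case True thus ?thesis by (simp add: f_neg)
  next
    case False thus ?thesis using x by (simp add: f_neg)
  qed
  have "(\<lambda>u. f (x - u) * f u) = (\<lambda>u. 0)" using z by (intro ext) 
  thus ?thesis unfolding g_def conv_fun_def by simp
qed

lemma mu_prob: "prob_space mu"
  unfolding mu_def by (rule prob_spaceI) (simp add: emeasure_density f_nn)

lemma sets_mu: "sets mu = sets borel" by (simp add: mu_def)

lemma mu_dist: "distribution mu" unfolding distribution_def using mu_prob sets_mu by simp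

lemma conv_mu: "mu \<star> mu = density lborel (\<lambda>x. ennreal (g x))"
proof -
  interpret P: prob_space mu by (rule mu_prob)
  have fm: "finite_measure (density lborel (\<lambda>x. ennreal (f x)))"
    using P.finite_measure_axioms by (simp add: mu_def)
  have "mu \<star> mu = density lborel (\<lambda>x. \<integral>\<^sup>+y. ennreal (f (x - y)) * ennreal (f y) \<partial>lborel)"
    unfolding mu_def by (rule convolution_density) (use fm in auto)
  also have "\<dots> = density lborel (\<lambda>x. ennreal (g x))"
  proof (rule density_cong)
    show "AE x in lborel. (\<integral>\<^sup>+y. ennreal (f (x - y)) * ennreal (f y) \<partial>lborel) = ennreal (g x)"
    proof (rule AE_I2)
      fix x
      have "(\<integral>\<^sup>+y. ennreal (f (x - y)) * ennreal (f y) \<partial>lborel) = (\<integral>\<^sup>+y. ennreal (f (x - y) * f y) \<partial>lborel)"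
        by (simp add: ennreal_mult f_nonneg)
      also have "\<dots> = ennreal (g x)"
        unfolding g_def conv_fun_def
        by (rule nn_integral_eq_integral[OF f_prod_int]) (simp add: f_nonneg)
      finally show "(\<integral>\<^sup>+y. ennreal (f (x - y)) * ennreal (f y) \<partial>lborel) = ennreal (g x)" .
    qed
  qed measurable
  finally show ?thesis .
qed

lemma mumu_prob: "prob_space (mu \<star> mu)"
proof -
  interpret P: prob_space mu by (rule mu_prob)
  interpret PP: pair_prob_space mu mu ..
  have "(\<lambda>(x::real,y). x + y) \<in> borel_measurable (borel \<Otimes>\<^sub>M borel)" by measurable
  hence m: "(\<lambda>(x,y). x + y) \<in> borel_measurable (mu \<Otimes>\<^sub>M mu)"
    by (simp add: measurable_cong_sets[OF sets_pair_measure_cong[OF sets_mu sets_mu] refl])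
  show ?thesis unfolding convolution_def by (rule PP.prob_space_distr[OF m])
qed

lemma g_nn: "(\<integral>\<^sup>+x. ennreal (g x) \<partial>lborel) = 1"
proof -
  interpret P: prob_space "mu \<star> mu" by (rule mumu_prob)
  have "emeasure (mu \<star> mu) (space (mu \<star> mu)) = 1" by (rule P.emeasure_space_1)
  thus ?thesis by (simp add: conv_mu emeasure_density)
qed

lemma g_int: "integrable lborel g"
  by (rule integrableI_nonneg) (auto simp: g_nonneg g_nn)

lemma g_integral: "integral\<^sup>L lborel g = 1"
  by (subst integral_eq_nn_integral) (auto simp: g_nonneg g_nn)

lemma p0_anti: "0 \<le> x \<Longrightarrow> x \<le> y \<Longrightarrow> p0 y \<le> p0 x"
  by (auto simp: p0_def intro!: divide_left_mono power_mono mult_pos_pos)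

lemma g_C: "\<exists>C. \<forall>y\<ge>0. g y \<le> C * p0 y"
proof -
  have "eventually (\<lambda>y. g y / p0 y < 2 / Z + 1) at_top"
    using order_tendstoD(2)[OF g_lim] by simp
  then obtain X where X: "\<And>y. y \<ge> X \<Longrightarrow> g y / p0 y < 2 / Z + 1"
    by (auto simp: eventually_at_top_linorder)
  define X' where "X' = max X 0"
  define C where "C = max (2 / Z + 1) (2 / p0 X')"
  have pX: "0 < p0 X'" unfolding X'_def by (simp add: p0_pos)
  have "g y \<le> C * p0 y" if y: "0 \<le> y" for y
  proof (cases "y \<ge> X'")
    case True
    hence "g y / p0 y < 2 / Z + 1" using X unfolding X'_def by simp
    moreover have "0 < p0 y" using y by (simp add: p0_pos)
    ultimately have "g y \<le> (2 / Z + 1) * p0 y" by (simp add: field_simps)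
    also have "\<dots> \<le> C * p0 y" unfolding C_def using p0_nonneg[of y] by (intro mult_right_mono) auto
    finally show ?thesis .
  next
    case False
    have "p0 X' \<le> p0 y" using False y by (intro p0_anti) auto
    have "g y \<le> 2" by (rule g_le2)
    also have "2 = (2 / p0 X') * p0 X'" using pX by simp
    also have "\<dots> \<le> (2 / p0 X') * p0 y" using \<open>p0 X' \<le> p0 y\<close> pX by (intro mult_left_mono) auto
    also have "\<dots> \<le> C * p0 y" unfolding C_def using p0_nonneg[of y] by (intro mult_right_mono) auto
    finally show ?thesis .
  qed
  thus ?thesis by blast
qed

lemma gg_lim: "((\<lambda>x. conv_fun g g x / p0 x) \<longlongrightarrow> 2 * (2 / Z) * 1) at_top"
proof -
  obtain C where C: "\<And>y. 0 \<le> y \<Longrightarrow> g y \<le> C * p0 y" using g_C by blast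
  have "((\<lambda>x. conv_fun g g x / p0 x) \<longlongrightarrow> 2 * (2 / Z) * integral\<^sup>L lborel g) at_top"
    by (rule conv_lim[where qa=g and qb="\<lambda>_. 0" and M=2 and K=2 and C=C])
       (use g_int g_lim C in \<open>auto simp: g_nonneg g_le2 g_neg\<close>)
  thus ?thesis by (simp add: g_integral)
qed



lemma measure_dens:
  fixes F :: "real \<Rightarrow> real"
  assumes [measurable]: "F \<in> borel_measurable borel" "A \<in> sets borel" and nn: "\<And>x. 0 \<le> F x"
  shows "measure (density lborel (\<lambda>x. ennreal (F x))) A = integral\<^sup>L lborel (\<lambda>v. F v * indicator A v)"
proof -
  have "measure (density lborel (\<lambda>x. ennreal (F x))) A
      = enn2real (\<integral>\<^sup>+x. ennreal (F x) * indicator A x \<partial>lborel)"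
    by (simp add: measure_def emeasure_density)
  also have "\<dots> = integral\<^sup>L lborel (\<lambda>v. F v * indicator A v)"
    by (rule enn2real_nn_integral_eq_integral) (auto simp: nn indicator_def)
  finally show ?thesis .
qed

lemma Wmu_eq: "measure mu A = integral\<^sup>L lborel (\<lambda>v. f v * indicator A v)" if "A \<in> sets borel" for A
  unfolding mu_def using that by (intro measure_dens) (auto simp: f_nonneg)

lemma Wmumu_eq: "measure (mu \<star> mu) A = integral\<^sup>L lborel (\<lambda>v. g v * indicator A v)" if "A \<in> sets borel" for A
  unfolding conv_mu using that by (intro measure_dens) (auto simp: g_nonneg)

lemma Wmu_lim: "((\<lambda>x. measure mu {x<..x+c} / p0 x) \<longlongrightarrow> 1 / Z * c) at_top" if c: "0 < c" for c
proof -
  have "((\<lambda>x. integral\<^sup>L lborel (\<lambda>v. f v * indicator {x<..x+c} v) / p0 x) \<longlongrightarrow> 1 / Z * c) at_top"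
  proof (rule window_lim[where qa="\<lambda>y. p0 y / Z" and qb="\<lambda>y. s y / Z" and C="1/Z"])
    show "((\<lambda>x. integral\<^sup>L lborel (\<lambda>v. s v / Z * indicator {x..} v) / p0 x) \<longlongrightarrow> 0) at_top"
    proof -
      have "((\<lambda>x::real. (1/2) powr (1 * x) * (1 + x)^2) \<longlongrightarrow> 0) at_top" by real_asymp
      from tail_lim[OF this] show ?thesis by simp
    qed
  qed (use Z_pos k1f_lim p0_int s_int c in \<open>auto simp: fk p0_nonneg s_nonneg\<close>)
  thus ?thesis by (simp add: Wmu_eq)
qed

lemma Wmumu_lim: "((\<lambda>x. measure (mu \<star> mu) {x<..x+c} / p0 x) \<longlongrightarrow> 2 / Z * c) at_top" if c: "0 < c" for c
proof -
  obtain C where C: "\<And>y. 0 \<le> y \<Longrightarrow> g y \<le> C * p0 y" using g_C by blast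
  have "((\<lambda>x. integral\<^sup>L lborel (\<lambda>v. g v * indicator {x<..x+c} v) / p0 x) \<longlongrightarrow> 2 / Z * c) at_top"
    by (rule window_lim[where qa=g and qb="\<lambda>_. 0" and C=C])
       (use g_int g_lim C c in \<open>auto simp: g_nonneg\<close>)
  thus ?thesis by (simp add: Wmumu_eq)
qed

lemma Wmu_meas: "(\<lambda>x. measure mu {x<..x+c}) \<in> borel_measurable borel" if c: "0 < c" for c
proof -
  interpret P: prob_space mu by (rule mu_prob)
  define Fm where "Fm y = measure mu {..y}" for y
  have "mono Fm" unfolding Fm_def mono_def
    by (intro allI impI P.finite_measure_mono) (auto simp: sets_mu)
  hence [measurable]: "Fm \<in> borel_measurable borel" by (rule borel_measurable_mono)
  have "measure mu {x<..x+c} = Fm (x + c) - Fm x" for x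
  proof -
    have "{x<..x+c} = {..x+c} - {..x}" by auto
    thus ?thesis unfolding Fm_def using c
      by (simp add: P.finite_measure_Diff sets_mu)
  qed
  moreover have "(\<lambda>x. Fm (x + c) - Fm x) \<in> borel_measurable borel" by measurable
  ultimately show ?thesis by simp
qed

lemma mu_S_loc: "mu \<in> S_loc"
  unfolding S_loc_def S_Delta_def L_Delta_def
proof (intro CollectI allI impI conjI mu_dist)
  fix c :: real assume c: "0 < c"
  show "(\<lambda>x. measure mu {x<..x + c}) \<in> classL"
    by (rule ratio_classL[OF Wmu_meas[OF c] _ Wmu_lim[OF c]]) (use c Z_pos in auto)
  show "(\<lambda>x. measure (mu \<star> mu) {x<..x + c}) \<sim>[at_top] (\<lambda>x. 2 * measure mu {x<..x + c})"
    by (rule ratio_equiv[OF Wmumu_lim[OF c] Wmu_lim[OF c]]) (use c Z_pos in auto)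
qed

lemma g_Sd: "g \<in> Sd"
  unfolding Sd_def Ld_def density_fun_def
proof (intro CollectI conjI allI)
  show "g \<in> borel_measurable borel" by simp
  show "0 \<le> g x" for x by (rule g_nonneg)
  show "(\<integral>\<^sup>+x. ennreal (g x) \<partial>lborel) = 1" by (rule g_nn)
  show "g \<in> classL" by (rule ratio_classL[OF g_meas g_nonneg g_lim]) (use Z_pos in auto)
  show "conv_fun g g \<sim>[at_top] (\<lambda>x. 2 * g x)"
    by (rule ratio_equiv[OF gg_lim g_lim]) (use Z_pos in auto)
qed

lemma mumu_S_ac: "(mu \<star> mu) \<in> S_ac"
  unfolding S_ac_def distribution_def
  using mumu_prob g_Sd conv_mu by auto

lemma mu_neg: "measure mu {..<0} = 0"
proof -
  have "measure mu {..<0} = integral\<^sup>L lborel (\<lambda>v. f v * indicator {..<0} v)" by (simp add: Wmu_eq)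
  also have "(\<lambda>v. f v * indicator {..<0} v) = (\<lambda>v. 0)"
    by (rule ext) (auto simp: indicator_def intro: f_neg)
  finally show ?thesis by simp
qed

lemma mu_In: "(1/2)^(n+1) / Z \<le> measure mu (In n)"
proof -
  have "integral\<^sup>L lborel (\<lambda>v. 1 / Z * indicator (In n) v) \<le> integral\<^sup>L lborel (\<lambda>v. f v * indicator (In n) v)"
  proof (rule Bochner_Integration.integral_mono)
    show "integrable lborel (\<lambda>v. 1 / Z * indicator (In n) v :: real)"
      by (simp add: emeasure_In)
    show "integrable lborel (\<lambda>v. f v * indicator (In n) v)"
      using integrable_mult_indicator[OF _ f_int, of "In n"] by (simp add: mult.commute)
    fix v
    show "1 / Z * indicator (In n) v \<le> f v * indicator (In n) v"
    proof (cases "v \<in> In n")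
      case True
      hence "s v = 1" by (auto simp: s_def U_def indicator_def)
      hence "1 / Z \<le> f v" using Z_pos p0_nonneg[of v] by (simp add: f_def divide_right_mono)
      thus ?thesis using True by simp
    qed simp
  qed
  also have "\<dots> = measure mu (In n)" by (simp add: Wmu_eq)
  finally show ?thesis by (simp add: emeasure_In measure_def)
qed

lemma mu_not_US: "mu \<notin> US_loc"
proof
  assume "mu \<in> US_loc"
  then obtain p where p: "unif_local_asymp mu p" unfolding US_loc_def by auto
  have "eventually (\<lambda>x. \<forall>c\<in>{0<..1}. \<bar>(measure mu {x-c<..x} / c) / p x - 1\<bar> < 1/2) at_top"
  proof -
    have all: "\<forall>e>0. eventually (\<lambda>x. \<forall>c\<in>{0<..1}. \<bar>(measure mu {x-c<..x} / c) / p x - 1\<bar> < e) at_top"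
      using p unfolding unif_local_asymp_def .
    show ?thesis by (rule all[rule_format]) simp
  qed
  then obtain X where X: "\<forall>x\<ge>X. \<forall>c\<in>{0<..1}. \<bar>(measure mu {x-c<..x} / c) / p x - 1\<bar> < 1/2"
    unfolding eventually_at_top_linorder by blast
  have W0: "((\<lambda>x. measure mu {x<..x+1}) \<longlongrightarrow> 0) at_top"
  proof -
    have "((\<lambda>x. (measure mu {x<..x+1} / p0 x) * p0 x) \<longlongrightarrow> (1 / Z * 1) * 0) at_top"
      by (intro tendsto_mult Wmu_lim p0_lim0) simp
    moreover have "eventually (\<lambda>x. (measure mu {x<..x+1} / p0 x) * p0 x = measure mu {x<..x+1}) at_top"
      using eventually_ge_at_top[of 0]
    proof eventually_elim
      case (elim x)
      hence "0 < p0 x" by (rule p0_pos)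
      thus ?case by simp
    qed
    ultimately show ?thesis by (simp add: Lim_transform_eventually)
  qed
  have "eventually (\<lambda>x. measure mu {x<..x+1} < 1 / (3 * Z)) at_top"
    using order_tendstoD(2)[OF W0] Z_pos by simp
  then obtain Y where Y: "\<And>y. y \<ge> Y \<Longrightarrow> measure mu {y<..y+1} < 1 / (3 * Z)"
    by (auto simp: eventually_at_top_linorder)
  define n where "n = nat \<lceil>max X Y\<rceil>"
  have nXY: "X \<le> real n" "Y \<le> real n" unfolding n_def by linarith+
  define w :: real where "w = (1/2)^(n+1)"
  define x where "x = real n + 1 + w"
  have w: "0 < w" "w \<le> 1" unfolding w_def by (simp, intro power_le_one) auto
  have xX: "X \<le> x" using nXY w unfolding x_def by simp
  have In_eq: "{x - w<..x} = In n" unfolding x_def In_def w_def by simp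
  have "{x - 1<..x} = {(x - 1)<..(x-1)+1}" by simp
  have r2: "measure mu {x - 1<..x} < 1 / (3 * Z)"
    using Y[of "x - 1"] nXY w unfolding x_def by (simp add: add_ac)
  have r1: "w / Z \<le> measure mu {x - w<..x}" using mu_In[of n] unfolding In_eq[symmetric] w_def .
  have A1: "\<bar>(measure mu {x-w<..x} / w) / p x - 1\<bar> < 1/2" by (rule X[rule_format, OF xX]) (use w in auto)
  have A2: "\<bar>(measure mu {x-1<..x} / 1) / p x - 1\<bar> < 1/2" by (rule X[rule_format, OF xX]) auto
  define r1' where "r1' = measure mu {x-w<..x} / w"
  define r2' where "r2' = measure mu {x-1<..x}"
  have r1'ge: "1 / Z \<le> r1'" unfolding r1'_def using r1 w by (simp add: field_simps)
  have r2'lt: "r2' < 1 / (3 * Z)" using r2 unfolding r2'_def .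
  have r2'nn: "0 \<le> r2'" unfolding r2'_def by simp
  have A1': "\<bar>r1' / p x - 1\<bar> < 1/2" using A1 unfolding r1'_def .
  have A2': "\<bar>r2' / p x - 1\<bar> < 1/2" using A2 unfolding r2'_def by simp
  have px: "0 < p x"
  proof (rule ccontr)
    assume "\<not> 0 < p x"
    hence "r2' / p x \<le> 0" using r2'nn by (simp add: divide_nonneg_nonpos)
    thus False using A2' by linarith
  qed
  have "r1' / p x < 3/2" using A1' unfolding abs_less_iff by linarith
  hence "r1' < 3/2 * p x" using px by (simp add: divide_less_eq)
  moreover have "1/2 < r2' / p x" using A2' unfolding abs_less_iff by linarith
  hence "1/2 * p x < r2'" using px by (simp add: less_divide_eq)
  ultimately have "r1' < 3 * r2'" by linarith
  also have "\<dots> < 1 / Z" using r2'lt Z_pos by (simp add: field_simps)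
  finally show False using r1'ge by linarith
qed

theorem theorem1p1:
  shows "\<exists>\<mu>. distribution \<mu> \<and> measure \<mu> {..<0} = 0 \<and>
           \<mu> \<in> S_loc - US_loc \<and> (\<mu> \<star> \<mu>) \<in> S_ac"
  using mu_dist mu_neg mu_S_loc mu_not_US mumu_S_ac by blast


end
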